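(* Let $k$ be a positive integer. In any prime $k$th-power distance labeling of the complete graph $K_4$, the four vertex labels do not all have the same parity.
   Context: A prime $k$th-power distance labeling of a graph $G$ is an injective map $L:V(G)\to\mathbb{Z}$ such that for every edge $uv$ of $G$, $|L(u)-L(v)|=p^j$ for some prime $p$ and some positive integer $j\le k$. *)

theory Defs
  imports "HOL-Computational_Algebra.Primes"
begin

definition prime_kth_power_distance_labeling ::
  "'a set \<Rightarrow> ('a \<Rightarrow> 'a \<Rightarrow> bool) \<Rightarrow> nat \<Rightarrow> ('a \<Rightarrow> int) \<Rightarrow> bool" where
  "prime_kth_power_distance_labeling V E k L \<longleftrightarrow>
     inj_on L V \<and>
     (\<forall>u\<in>V. \<forall>v\<in>V. E u v \<longrightarrow>
        (\<exists>p j. prime (p::nat) \<and> 1 \<le> j \<and> j \<le> k \<and> \<bar>L u - L v\<bar> = int p ^ j))"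

definition complete_edges :: "'a \<Rightarrow> 'a \<Rightarrow> bool" where
  "complete_edges u v \<longleftrightarrow> u \<noteq> v"

end

theory Submission
  imports Defs
begin

lemma pow2_lt: "(2::int)^a < 2^b \<Longrightarrow> a < b"
  using power_strict_increasing_iff[of "2::int" a b] by simp

lemma pow2_sum1:
  assumes "(2::int)^x + 2^y = 2^z" "x < y" shows False
proof -
  have p: "0 < (2::int)^x" by simp
  have q: "(2::int)^x < 2^y" using assms(2) by simp
  have "(2::int)^y < 2^z" using p assms(1) by linarith
  hence "y < z" by (rule pow2_lt)
  moreover have "(2::int)^z < 2^(Suc y)" using q assms(1) by (simp only: power_Suc)
  hence "z < Suc y" by (rule pow2_lt)
  ultimately show False by simp
qed

lemma pow2_sum:
  assumes "(2::int)^x + 2^y = 2^z" shows "x = y"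
  using pow2_sum1[of x y z] pow2_sum1[of y x z] assms by (metis add.commute linorder_neqE_nat)

lemma four:
  fixes a b c d :: int
  assumes "b - a = 2^x1" "c - b = 2^x2" "c - a = 2^x3" "d - c = 2^x4" "d - b = 2^x5" "d - a = 2^x6"
  shows False
proof -
  have "x1 = x2" using pow2_sum[of x1 x2 x3] assms by simp
  moreover have "x2 = x4" using pow2_sum[of x2 x4 x5] assms by simp
  ultimately have e: "(2::int)^x6 = 3 * 2^x1" using assms by simp
  have p: "0 < (2::int)^x1" by simp
  have "(2::int)^(Suc x1) < 2^x6" using e p by simp
  hence "Suc x1 < x6" by (rule pow2_lt)
  moreover have "(2::int)^x6 < 2^(Suc (Suc x1))" using e p by simp
  hence "x6 < Suc (Suc x1)" by (rule pow2_lt)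
  ultimately show False by simp
qed

theorem mainTheorem9:
  fixes V :: "'a set" and k :: nat and L :: "'a \<Rightarrow> int"
  assumes "k \<ge> 1"
    and "finite V" and "card V = 4"
    and "prime_kth_power_distance_labeling V complete_edges k L"
  shows "\<not> (\<forall>u\<in>V. \<forall>v\<in>V. even (L u) = even (L v))"
proof
  assume par: "\<forall>u\<in>V. \<forall>v\<in>V. even (L u) = even (L v)"
  have inj: "inj_on L V" using assms(4) unfolding prime_kth_power_distance_labeling_def by blast
  have pw: "\<And>u v. u \<in> V \<Longrightarrow> v \<in> V \<Longrightarrow> u \<noteq> v \<Longrightarrow>
     \<exists>p j. prime (p::nat) \<and> 1 \<le> j \<and> j \<le> k \<and> \<bar>L u - L v\<bar> = int p ^ j"
    using assms(4) unfolding prime_kth_power_distance_labeling_def complete_edges_def by simp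
  define S where "S = L ` V"
  have fS: "finite S" using assms(2) S_def by simp
  have cS: "card S = 4" using card_image[OF inj] assms(3) S_def by simp
  have P: "\<And>p q. p \<in> S \<Longrightarrow> q \<in> S \<Longrightarrow> p < q \<Longrightarrow> \<exists>j. q - p = 2^j"
  proof -
    fix p q assume "p \<in> S" "q \<in> S" "p < q"
    then obtain u v where uv: "u \<in> V" "v \<in> V" "p = L u" "q = L v" using S_def by auto
    hence "u \<noteq> v" using \<open>p < q\<close> by auto
    then obtain r j where rj: "prime (r::nat)" "1 \<le> j" "j \<le> k" "\<bar>L v - L u\<bar> = int r ^ j"
      using pw[OF uv(2) uv(1)] by blast
    have "even (L v) = even (L u)" using par uv(1,2) by blast
    hence "even (L v - L u)" by simp
    hence "even (int r ^ j)" using rj(4) by (metis dvd_abs_iff)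
    hence "even (int r)" using rj(2) by simp
    hence "even r" by simp
    hence "r = 2" using rj(1) prime_odd_nat prime_ge_2_nat by (metis le_neq_implies_less)
    hence "q - p = 2^j" using rj(4) uv \<open>p < q\<close> by simp
    thus "\<exists>j. q - p = 2^j" by blast
  qed
  define xs where "xs = sorted_list_of_set S"
  have len: "length xs = 4" using cS fS xs_def by simp
  have st: "sorted_wrt (<) xs" using xs_def by simp
  have set: "set xs = S" using xs_def fS by simp
  obtain a b c d where xs4: "xs = [a,b,c,d]" using len
    by (cases xs rule: list.exhaust; auto simp: numeral_eq_Suc length_Suc_conv)
  have ord: "a < b" "b < c" "c < d" using st xs4 by auto
  have mem: "a \<in> S" "b \<in> S" "c \<in> S" "d \<in> S" using set xs4 by auto
  obtain x1 where "b - a = 2^x1" using P[OF mem(1,2)] ord by auto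
  moreover obtain x2 where "c - b = 2^x2" using P[OF mem(2,3)] ord by auto
  moreover obtain x3 where "c - a = 2^x3" using P[OF mem(1,3)] ord by auto
  moreover obtain x4 where "d - c = 2^x4" using P[OF mem(3,4)] ord by auto
  moreover obtain x5 where "d - b = 2^x5" using P[OF mem(2,4)] ord by auto
  moreover obtain x6 where "d - a = 2^x6" using P[OF mem(1,4)] ord by auto
  ultimately show False by (rule four)
qed

end
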